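(* Let $\mathcal L$ be an algebraic system, $\mathbf{STop}\mathcal{L}$ the category of semitopological $\mathcal L$-structures, and let $X$ be (the domain of) a structure in $\mathbf{STop}\mathcal{L}$. Then $\mathrm{r}_{\mathcal C_1}X=X/R_{\mathcal C_1}$, where $R_{\mathcal C_1}$ is the intersection of all equivalence relations on $X$ whose equivalence classes are closed in $X$; furthermore, $R_{\mathcal C_1}$ is an $\mathcal L$-congruence on $X$.
   Context: $\mathcal C_1$ is the epireflective subcategory of $\mathbf{Top}$ consisting of $T_1$ spaces and $\mathrm{r}_{\mathcal C_1}X$ is the $T_1$-reflection of $X$ (the universal $T_1$ quotient: every continuous map from $X$ into a $T_1$ space factors uniquely through the continuous surjection $X\to\mathrm{r}_{\mathcal C_1}X$). An algebraic system $\mathcal L$ consists of constant symbols, function symbols of finite arity $\ge1$ and equations; a semitopological $\mathcal L$-structure is an $\mathcal L$-structure on a topological space with all operations separately continuous. An $\mathcal L$-congruence is an equivalence relation $R$ such that whenever $(x_i,y_i)\in R$ for $i=1,\dots,n$ and $\Phi$ is an $n$-ary operation, $(\Phi(x_1,\dots,x_n),\Phi(y_1,\dots,y_n))\in R$. *)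

theory Defs
  imports "HOL-Analysis.Analysis"
begin

text \<open>Terms over function symbols of type 'f, with variables indexed by nat.
  Constant symbols are function symbols of arity 0.\<close>
datatype 'f trm = Var nat | Fn 'f "'f trm list"

fun wf_trm :: "('f \<Rightarrow> nat) \<Rightarrow> 'f trm \<Rightarrow> bool" where
  "wf_trm ar (Var n) = True"
| "wf_trm ar (Fn f ts) = (length ts = ar f \<and> (\<forall>t\<in>set ts. wf_trm ar t))"

fun eval_trm :: "('f \<Rightarrow> 'a list \<Rightarrow> 'a) \<Rightarrow> (nat \<Rightarrow> 'a) \<Rightarrow> 'f trm \<Rightarrow> 'a" where
  "eval_trm op v (Var n) = v n"
| "eval_trm op v (Fn f ts) = op f (map (eval_trm op v) ts)"

definition algebraic_system :: "('f \<Rightarrow> nat) \<Rightarrow> ('f trm \<times> 'f trm) set \<Rightarrow> bool" where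
  "algebraic_system ar E \<longleftrightarrow> (\<forall>(s,t)\<in>E. wf_trm ar s \<and> wf_trm ar t)"

definition L_structure ::
  "('f \<Rightarrow> nat) \<Rightarrow> ('f trm \<times> 'f trm) set \<Rightarrow> 'a topology \<Rightarrow> ('f \<Rightarrow> 'a list \<Rightarrow> 'a) \<Rightarrow> bool" where
  "L_structure ar E X op \<longleftrightarrow>
     (\<forall>f xs. length xs = ar f \<and> set xs \<subseteq> topspace X \<longrightarrow> op f xs \<in> topspace X) \<and>
     (\<forall>(s,t)\<in>E. \<forall>v. (\<forall>n. v n \<in> topspace X) \<longrightarrow> eval_trm op v s = eval_trm op v t)"

definition semitopological_L_structure ::
  "('f \<Rightarrow> nat) \<Rightarrow> ('f trm \<times> 'f trm) set \<Rightarrow> 'a topology \<Rightarrow> ('f \<Rightarrow> 'a list \<Rightarrow> 'a) \<Rightarrow> bool" where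
  "semitopological_L_structure ar E X op \<longleftrightarrow> L_structure ar E X op \<and>
     (\<forall>f xs i. length xs = ar f \<and> set xs \<subseteq> topspace X \<and> i < ar f \<longrightarrow>
        continuous_map X X (\<lambda>y. op f (xs[i := y])))"

definition L_congruence ::
  "('f \<Rightarrow> nat) \<Rightarrow> 'a topology \<Rightarrow> ('f \<Rightarrow> 'a list \<Rightarrow> 'a) \<Rightarrow> ('a \<times> 'a) set \<Rightarrow> bool" where
  "L_congruence ar X op R \<longleftrightarrow> equiv (topspace X) R \<and>
     (\<forall>f xs ys. length xs = ar f \<and> length ys = ar f \<and> (\<forall>i < ar f. (xs ! i, ys ! i) \<in> R)
        \<longrightarrow> (op f xs, op f ys) \<in> R)"

definition R_C1 :: "'a topology \<Rightarrow> ('a \<times> 'a) set" where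
  "R_C1 X = \<Inter> {S. equiv (topspace X) S \<and> (\<forall>c \<in> topspace X // S. closedin X c)}"

definition quotient_topology :: "'a topology \<Rightarrow> ('a \<times> 'a) set \<Rightarrow> 'a set topology" where
  "quotient_topology X R = topology (\<lambda>U. U \<subseteq> topspace X // R \<and>
      openin X {x \<in> topspace X. R `` {x} \<in> U})"

text \<open>q : X \<rightarrow> Z is a T1-reflection of X (universal property tested against T1
  spaces whose points have type 'b): Z is T1, q is a continuous surjection, and every
  continuous map from X into a T1 space factors uniquely through q.\<close>
definition T1_reflection :: "'b itself \<Rightarrow> 'a topology \<Rightarrow> 'c topology \<Rightarrow> ('a \<Rightarrow> 'c) \<Rightarrow> bool" where
  "T1_reflection (_::'b itself) X Z q \<longleftrightarrow>
     t1_space Z \<and> continuous_map X Z q \<and> q ` topspace X = topspace Z \<and>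
     (\<forall>(Y::'b topology) f. t1_space Y \<and> continuous_map X Y f \<longrightarrow>
        (\<exists>g. continuous_map Z Y g \<and> (\<forall>x \<in> topspace X. g (q x) = f x) \<and>
             (\<forall>g'. continuous_map Z Y g' \<and> (\<forall>x \<in> topspace X. g' (q x) = f x) \<longrightarrow>
                  (\<forall>z \<in> topspace Z. g' z = g z))))"

end

theory Submission
  imports Defs
begin

lemma RC1_fam_nonempty:
  "topspace X \<times> topspace X \<in> {S. equiv (topspace X) S \<and> (\<forall>c \<in> topspace X // S. closedin X c)}"
proof -
  have "equiv (topspace X) (topspace X \<times> topspace X)"
    by (simp add: equiv_def refl_on_def sym_def trans_def)
  moreover have "\<forall>c \<in> topspace X // (topspace X \<times> topspace X). closedin X c"
  proof (clarsimp simp: quotient_def)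
    fix y assume "y \<in> topspace X"
    then have "(topspace X \<times> topspace X) `` {y} = topspace X" by auto
    then show "closedin X ((topspace X \<times> topspace X) `` {y})" by simp
  qed
  ultimately show ?thesis by simp
qed

lemma RC1_sub:
  assumes "equiv (topspace X) S" "\<forall>c \<in> topspace X // S. closedin X c"
  shows "R_C1 X \<subseteq> S"
  using assms unfolding R_C1_def by blast

lemma RC1_equiv: "equiv (topspace X) (R_C1 X)"
proof -
  let ?F = "{S. equiv (topspace X) S \<and> (\<forall>c \<in> topspace X // S. closedin X c)}"
  have ne: "topspace X \<times> topspace X \<in> ?F" by (rule RC1_fam_nonempty)
  have R: "R_C1 X = \<Inter> ?F" by (simp add: R_C1_def)
  have sub: "R_C1 X \<subseteq> topspace X \<times> topspace X"
    using ne unfolding R by (rule Inter_lower)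
  have eq: "\<And>S. S \<in> ?F \<Longrightarrow> equiv (topspace X) S" by blast
  show ?thesis
  proof (rule equivI)
    show "R_C1 X \<subseteq> topspace X \<times> topspace X" by (rule sub)
    show "refl_on (topspace X) (R_C1 X)"
    proof (rule refl_onI)
      fix x assume x: "x \<in> topspace X"
      show "(x, x) \<in> R_C1 X" unfolding R
      proof (rule InterI)
        fix S assume "S \<in> ?F"
        then have "equiv (topspace X) S" by (rule eq)
        then show "(x, x) \<in> S" using x by (meson equivE refl_onD)
      qed
    qed
    show "sym (R_C1 X)"
    proof (rule symI)
      fix a b assume ab: "(a, b) \<in> R_C1 X"
      show "(b, a) \<in> R_C1 X" unfolding R
      proof (rule InterI)
        fix S assume S: "S \<in> ?F"
        then have "equiv (topspace X) S" by (rule eq)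
        moreover have "(a, b) \<in> S" using ab S unfolding R by (rule InterD)
        ultimately show "(b, a) \<in> S" by (meson equivE symD)
      qed
    qed
    show "trans (R_C1 X)"
    proof (rule transI)
      fix a b c assume ab: "(a, b) \<in> R_C1 X" and bc: "(b, c) \<in> R_C1 X"
      show "(a, c) \<in> R_C1 X" unfolding R
      proof (rule InterI)
        fix S assume S: "S \<in> ?F"
        then have "equiv (topspace X) S" by (rule eq)
        moreover have "(a, b) \<in> S" using ab S unfolding R by (rule InterD)
        moreover have "(b, c) \<in> S" using bc S unfolding R by (rule InterD)
        ultimately show "(a, c) \<in> S" by (meson equivE transD)
      qed
    qed
  qed
qed

lemma RC1_class_closed:
  assumes "x \<in> topspace X"
  shows "closedin X (R_C1 X `` {x})"
proof -
  let ?F = "{S. equiv (topspace X) S \<and> (\<forall>c \<in> topspace X // S. closedin X c)}"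
  have ne: "topspace X \<times> topspace X \<in> ?F" by (rule RC1_fam_nonempty)
  have eq: "R_C1 X `` {x} = \<Inter> ((\<lambda>S. S `` {x}) ` ?F)"
    unfolding R_C1_def by auto
  have "closedin X (\<Inter> ((\<lambda>S. S `` {x}) ` ?F))"
  proof (rule closedin_Inter)
    show "(\<lambda>S. S `` {x}) ` ?F \<noteq> {}" using ne by blast
    show "\<And>K. K \<in> (\<lambda>S. S `` {x}) ` ?F \<Longrightarrow> closedin X K"
      using assms by (auto simp: quotient_def)
  qed
  then show ?thesis using eq by simp
qed


lemma quot_istop:
  "istopology (\<lambda>U. U \<subseteq> topspace X // R \<and> openin X {x \<in> topspace X. R `` {x} \<in> U})"
  unfolding istopology_def
proof (rule conjI; intro allI impI)
  fix S T
  assume S: "S \<subseteq> topspace X // R \<and> openin X {x \<in> topspace X. R `` {x} \<in> S}"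
    and T: "T \<subseteq> topspace X // R \<and> openin X {x \<in> topspace X. R `` {x} \<in> T}"
  have e: "{x \<in> topspace X. R `` {x} \<in> S \<inter> T} =
      {x \<in> topspace X. R `` {x} \<in> S} \<inter> {x \<in> topspace X. R `` {x} \<in> T}" by blast
  show "S \<inter> T \<subseteq> topspace X // R \<and> openin X {x \<in> topspace X. R `` {x} \<in> S \<inter> T}"
    using S T unfolding e by blast
next
  fix K :: "'a set set set"
  assume K: "\<forall>U\<in>K. U \<subseteq> topspace X // R \<and> openin X {x \<in> topspace X. R `` {x} \<in> U}"
  have e: "{x \<in> topspace X. R `` {x} \<in> \<Union>K} =
      \<Union> ((\<lambda>U. {x \<in> topspace X. R `` {x} \<in> U}) ` K)" by blast
  have "openin X (\<Union> ((\<lambda>U. {x \<in> topspace X. R `` {x} \<in> U}) ` K))"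
    using K by blast
  then show "\<Union>K \<subseteq> topspace X // R \<and> openin X {x \<in> topspace X. R `` {x} \<in> \<Union>K}"
    using K unfolding e by blast
qed

lemma openin_quot:
  "openin (quotient_topology X R) U \<longleftrightarrow>
     U \<subseteq> topspace X // R \<and> openin X {x \<in> topspace X. R `` {x} \<in> U}"
  unfolding quotient_topology_def using quot_istop[of X R] by simp

lemma topspace_quot: "topspace (quotient_topology X R) = topspace X // R"
proof
  show "topspace (quotient_topology X R) \<subseteq> topspace X // R"
    unfolding topspace_def openin_quot by blast
  have "{x \<in> topspace X. R `` {x} \<in> topspace X // R} = topspace X"
    by (auto intro: quotientI)
  then have "openin (quotient_topology X R) (topspace X // R)"
    unfolding openin_quot by simp
  then show "topspace X // R \<subseteq> topspace (quotient_topology X R)"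
    by (simp add: openin_subset)
qed

lemma class_eq_iff_mem:
  assumes "equiv A R" "x \<in> A" "c \<in> A // R"
  shows "R `` {x} = c \<longleftrightarrow> x \<in> c"
proof -
  obtain a where a: "a \<in> A" "c = R `` {a}" using assms(3) by (auto elim: quotientE)
  have "R `` {x} = R `` {a} \<longleftrightarrow> (x, a) \<in> R"
    using assms(1,2) a(1) by (rule eq_equiv_class_iff)
  also have "\<dots> \<longleftrightarrow> (a, x) \<in> R" using assms(1) by (meson equivE symD)
  finally show ?thesis using a by simp
qed

lemma RC1_t1: "t1_space (quotient_topology X (R_C1 X))"
  unfolding t1_space_closedin_singleton topspace_quot
proof
  let ?R = "R_C1 X"
  fix c assume c: "c \<in> topspace X // ?R"
  obtain a where a: "a \<in> topspace X" "c = ?R `` {a}" using c by (auto elim: quotientE)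
  have cl: "closedin X c" using a RC1_class_closed by simp
  have e: "{x \<in> topspace X. ?R `` {x} \<in> topspace X // ?R - {c}} = topspace X - c"
    using class_eq_iff_mem[OF RC1_equiv _ c] by (auto intro: quotientI)
  have "openin (quotient_topology X ?R) (topspace X // ?R - {c})"
    unfolding openin_quot e using cl by (auto simp: closedin_def)
  then show "closedin (quotient_topology X ?R) {c}"
    using c by (simp add: closedin_def topspace_quot)
qed

lemma RC1_qcont: "continuous_map X (quotient_topology X R) (\<lambda>x. R `` {x})"
  unfolding continuous_map topspace_quot
  by (auto intro: quotientI simp: openin_quot)

lemma RC1_universal:
  fixes Y :: "'b topology"
  assumes Y: "t1_space Y" and f: "continuous_map X Y f"
  shows "\<exists>g. continuous_map (quotient_topology X (R_C1 X)) Y g \<and>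
             (\<forall>x \<in> topspace X. g (R_C1 X `` {x}) = f x) \<and>
             (\<forall>g'. continuous_map (quotient_topology X (R_C1 X)) Y g' \<and>
                 (\<forall>x \<in> topspace X. g' (R_C1 X `` {x}) = f x) \<longrightarrow>
                  (\<forall>z \<in> topspace (quotient_topology X (R_C1 X)). g' z = g z))"
proof -
  let ?R = "R_C1 X"
  define S where "S = {(x, y). x \<in> topspace X \<and> y \<in> topspace X \<and> f x = f y}"
  have eqS: "equiv (topspace X) S"
    unfolding S_def by (auto simp: equiv_def refl_on_def sym_def trans_def)
  have clS: "\<forall>c \<in> topspace X // S. closedin X c"
  proof
    fix c assume "c \<in> topspace X // S"
    then obtain a where a: "a \<in> topspace X" "c = S `` {a}" by (auto elim: quotientE)
    have fa: "f a \<in> topspace Y" using f a(1) by (simp add: continuous_map_def Pi_iff)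
    have "closedin Y {f a}" using Y fa by (simp add: t1_space_closedin_singleton)
    then have "closedin X {x \<in> topspace X. f x \<in> {f a}}"
      using f by (rule closedin_continuous_map_preimage[rotated])
    moreover have "c = {x \<in> topspace X. f x \<in> {f a}}" using a unfolding S_def by auto
    ultimately show "closedin X c" by simp
  qed
  have RS: "?R \<subseteq> S" using RC1_sub[OF eqS clS] .
  define g where "g c = f (SOME x. x \<in> c)" for c
  have gq: "g (?R `` {x}) = f x" if x: "x \<in> topspace X" for x
  proof -
    have "x \<in> ?R `` {x}" using x RC1_equiv by (meson equiv_class_self)
    then have "(SOME y. y \<in> ?R `` {x}) \<in> ?R `` {x}" by (rule someI)
    then have "(x, SOME y. y \<in> ?R `` {x}) \<in> S" using RS by blast
    then show ?thesis unfolding g_def S_def by simp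
  qed
  have cg: "continuous_map (quotient_topology X ?R) Y g"
    unfolding continuous_map topspace_quot
  proof (intro conjI allI impI)
    show "g ` (topspace X // ?R) \<subseteq> topspace Y"
    proof
      fix y assume "y \<in> g ` (topspace X // ?R)"
      then obtain x where x: "x \<in> topspace X" "y = g (?R `` {x})" by (auto elim!: quotientE)
      then show "y \<in> topspace Y" using gq f by (auto simp: continuous_map_def Pi_iff)
    qed
    fix U assume U: "openin Y U"
    have e: "{x \<in> topspace X. ?R `` {x} \<in> {c \<in> topspace X // ?R. g c \<in> U}} =
       {x \<in> topspace X. f x \<in> U}" using gq by (auto intro: quotientI)
    show "openin (quotient_topology X ?R) {c \<in> topspace X // ?R. g c \<in> U}"
      unfolding openin_quot e using U f by (auto simp: continuous_map_def)
  qed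
  show ?thesis
  proof (intro exI conjI allI impI ballI)
    show "continuous_map (quotient_topology X ?R) Y g" by (rule cg)
    show "\<And>x. x \<in> topspace X \<Longrightarrow> g (?R `` {x}) = f x" by (rule gq)
    fix g' z
    assume h: "continuous_map (quotient_topology X ?R) Y g' \<and>
                 (\<forall>x \<in> topspace X. g' (?R `` {x}) = f x)"
      and z: "z \<in> topspace (quotient_topology X ?R)"
    obtain x where "x \<in> topspace X" "z = ?R `` {x}" using z
      by (auto simp: topspace_quot elim: quotientE)
    then show "g' z = g z" using h gq by simp
  qed
qed

lemma list_step:
  assumes "k < length xs" "length ys = length xs"
  shows "take (Suc k) ys @ drop (Suc k) xs = (take k ys @ drop k xs)[k := ys ! k]"
proof -
  have ky: "k < length ys" using assms by simp
  have lt: "length (take k ys) = k" using ky by simp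
  have d: "drop k xs = xs ! k # drop (Suc k) xs" using assms(1) by (rule Cons_nth_drop_Suc[symmetric])
  have t: "take (Suc k) ys = take k ys @ [ys ! k]" using ky by (rule take_Suc_conv_app_nth)
  have "(take k ys @ drop k xs)[k := ys ! k] = take k ys @ (xs ! k # drop (Suc k) xs)[0 := ys ! k]"
    unfolding d using lt by (simp add: list_update_append)
  also have "\<dots> = take (Suc k) ys @ drop (Suc k) xs" unfolding t by simp
  finally show ?thesis by simp
qed

lemma cong_step:
  assumes st: "semitopological_L_structure ar E X op"
    and xs: "length xs = ar f" "set xs \<subseteq> topspace X" and i: "i < ar f"
    and ab: "(a, b) \<in> R_C1 X"
  shows "(op f (xs[i := a]), op f (xs[i := b])) \<in> R_C1 X"
proof -
  let ?R = "R_C1 X"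
  define h where "h y = op f (xs[i := y])" for y
  have all: "\<forall>f xs i. length xs = ar f \<and> set xs \<subseteq> topspace X \<and> i < ar f \<longrightarrow>
        continuous_map X X (\<lambda>y. op f (xs[i := y]))"
    using st unfolding semitopological_L_structure_def by (rule conjunct2)
  have hc: "continuous_map X X h"
    unfolding h_def using all xs i by simp
  have hm: "h u \<in> topspace X" if "u \<in> topspace X" for u
    using hc that by (simp add: continuous_map_def Pi_iff)
  define S where "S = {(u, v). u \<in> topspace X \<and> v \<in> topspace X \<and> (h u, h v) \<in> ?R}"
  have eqR: "equiv (topspace X) ?R" by (rule RC1_equiv)
  have Sd: "\<And>u v. (u, v) \<in> S \<longleftrightarrow> u \<in> topspace X \<and> v \<in> topspace X \<and> (h u, h v) \<in> ?R"
    unfolding S_def by simp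
  have Rr: "\<And>u. u \<in> topspace X \<Longrightarrow> (u, u) \<in> ?R" using eqR by (meson equivE refl_onD)
  have Rs: "\<And>u v. (u, v) \<in> ?R \<Longrightarrow> (v, u) \<in> ?R" using eqR by (meson equivE symD)
  have Rt: "\<And>u v w. (u, v) \<in> ?R \<Longrightarrow> (v, w) \<in> ?R \<Longrightarrow> (u, w) \<in> ?R"
    using eqR by (meson equivE transD)
  have eqS: "equiv (topspace X) S"
  proof (rule equivI)
    show "S \<subseteq> topspace X \<times> topspace X"
    proof
      fix p assume "p \<in> S"
      then show "p \<in> topspace X \<times> topspace X" using Sd by (cases p) simp
    qed
    show "refl_on (topspace X) S"
    proof (rule refl_onI)
      fix u assume "u \<in> topspace X"
      then show "(u, u) \<in> S" using Sd hm Rr by simp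
    qed
    show "sym S"
    proof (rule symI)
      fix u v assume "(u, v) \<in> S"
      then show "(v, u) \<in> S" using Sd Rs by simp
    qed
    show "trans S"
    proof (rule transI)
      fix u v w assume "(u, v) \<in> S" "(v, w) \<in> S"
      then show "(u, w) \<in> S" using Sd Rt by meson
    qed
  qed
  have clS: "\<forall>c \<in> topspace X // S. closedin X c"
  proof
    fix c assume "c \<in> topspace X // S"
    then obtain u where u: "u \<in> topspace X" "c = S `` {u}" by (blast elim: quotientE)
    have "closedin X (?R `` {h u})" by (rule RC1_class_closed[OF hm[OF u(1)]])
    then have "closedin X {v \<in> topspace X. h v \<in> ?R `` {h u}}"
      using hc by (rule closedin_continuous_map_preimage[rotated])
    moreover have "c = {v \<in> topspace X. h v \<in> ?R `` {h u}}"
    proof -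
      have "S `` {u} = {v \<in> topspace X. h v \<in> ?R `` {h u}}"
      proof (rule set_eqI)
        fix v
        have "v \<in> S `` {u} \<longleftrightarrow> (u, v) \<in> S" by (rule Image_singleton_iff)
        also have "\<dots> \<longleftrightarrow> v \<in> topspace X \<and> (h u, h v) \<in> ?R" using u(1) Sd by simp
        also have "\<dots> \<longleftrightarrow> v \<in> {v \<in> topspace X. h v \<in> ?R `` {h u}}" by simp
        finally show "v \<in> S `` {u} \<longleftrightarrow> v \<in> {v \<in> topspace X. h v \<in> ?R `` {h u}}" .
      qed
      then show ?thesis using u(2) by simp
    qed
    ultimately show "closedin X c" by simp
  qed
  have "?R \<subseteq> S" by (rule RC1_sub[OF eqS clS])
  then have "(a, b) \<in> S" using ab by blast
  then have "(h a, h b) \<in> ?R" using Sd by simp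
  then show ?thesis unfolding h_def .
qed

lemma RC1_cong:
  assumes st: "semitopological_L_structure ar E X op"
  shows "L_congruence ar X op (R_C1 X)"
  unfolding L_congruence_def
proof (intro conjI allI impI)
  let ?R = "R_C1 X"
  have eqR: "equiv (topspace X) ?R" by (rule RC1_equiv)
  show "equiv (topspace X) ?R" by (rule eqR)
  fix f xs ys
  assume h: "length xs = ar f \<and> length ys = ar f \<and> (\<forall>i<ar f. (xs ! i, ys ! i) \<in> ?R)"
  have sub: "?R \<subseteq> topspace X \<times> topspace X" using eqR by (rule equivE)
  have xsT: "set xs \<subseteq> topspace X"
  proof
    fix x assume "x \<in> set xs"
    then obtain i where "i < length xs" "x = xs ! i" by (auto simp: in_set_conv_nth)
    then show "x \<in> topspace X" using h sub by auto
  qed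
  have ysT: "set ys \<subseteq> topspace X"
  proof
    fix x assume "x \<in> set ys"
    then obtain i where "i < length ys" "x = ys ! i" by (auto simp: in_set_conv_nth)
    then show "x \<in> topspace X" using h sub by auto
  qed
  have opT: "op f xs \<in> topspace X"
    using st h xsT unfolding semitopological_L_structure_def L_structure_def by blast
  have "k \<le> ar f \<Longrightarrow> (op f xs, op f (take k ys @ drop k xs)) \<in> ?R" for k
  proof (induction k)
    case 0
    then show ?case using opT eqR by (auto dest: equivE refl_onD)
  next
    case (Suc k)
    let ?zs = "take k ys @ drop k xs"
    have k: "k < length xs" using Suc h by simp
    have IH: "(op f xs, op f ?zs) \<in> ?R" using Suc by simp
    have lz: "length ?zs = ar f" using h k by simp
    have zT: "set ?zs \<subseteq> topspace X"
      using xsT ysT set_take_subset[of k ys] set_drop_subset[of k xs] by auto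
    have zk: "?zs ! k = xs ! k" using h k by (simp add: nth_append)
    have "?zs[k := ?zs ! k] = ?zs" by (rule list_update_id)
    then have e1: "?zs[k := xs ! k] = ?zs" by (simp only: zk)
    have e2: "take (Suc k) ys @ drop (Suc k) xs = ?zs[k := ys ! k]"
      using k h by (simp add: list_step)
    have c: "(op f (?zs[k := xs ! k]), op f (?zs[k := ys ! k])) \<in> ?R"
    proof (rule cong_step[OF st lz zT])
      show "k < ar f" using k h by simp
      show "(xs ! k, ys ! k) \<in> ?R" using k h by simp
    qed
    have "(op f ?zs, op f (take (Suc k) ys @ drop (Suc k) xs)) \<in> ?R"
      using c unfolding e1 e2[symmetric] .
    with IH show ?case using eqR by (meson equivE transD)
  qed
  then have "(op f xs, op f (take (ar f) ys @ drop (ar f) xs)) \<in> ?R" by simp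
  moreover have "take (ar f) ys @ drop (ar f) xs = ys" using h by simp
  ultimately show "(op f xs, op f ys) \<in> ?R" by simp
qed

theorem corollary3p12:
  fixes ar :: "'f \<Rightarrow> nat" and E :: "('f trm \<times> 'f trm) set"
    and X :: "'a topology" and op :: "'f \<Rightarrow> 'a list \<Rightarrow> 'a"
  assumes "algebraic_system ar E"
    and "semitopological_L_structure ar E X op"
  shows "T1_reflection TYPE('b) X (quotient_topology X (R_C1 X)) (\<lambda>x. R_C1 X `` {x})
         \<and> L_congruence ar X op (R_C1 X)"
proof
  show "L_congruence ar X op (R_C1 X)" using assms(2) by (rule RC1_cong)
  show "T1_reflection TYPE('b) X (quotient_topology X (R_C1 X)) (\<lambda>x. R_C1 X `` {x})"
    unfolding T1_reflection_def
  proof (intro conjI allI impI)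
    show "t1_space (quotient_topology X (R_C1 X))" by (rule RC1_t1)
    show "continuous_map X (quotient_topology X (R_C1 X)) (\<lambda>x. R_C1 X `` {x})"
      by (rule RC1_qcont)
    show "(\<lambda>x. R_C1 X `` {x}) ` topspace X = topspace (quotient_topology X (R_C1 X))"
      unfolding topspace_quot quotient_def by blast
    fix Y :: "'b topology" and f
    assume "t1_space Y \<and> continuous_map X Y f"
    then show "\<exists>g. continuous_map (quotient_topology X (R_C1 X)) Y g \<and>
             (\<forall>x \<in> topspace X. g (R_C1 X `` {x}) = f x) \<and>
             (\<forall>g'. continuous_map (quotient_topology X (R_C1 X)) Y g' \<and>
                 (\<forall>x \<in> topspace X. g' (R_C1 X `` {x}) = f x) \<longrightarrow>
                  (\<forall>z \<in> topspace (quotient_topology X (R_C1 X)). g' z = g z))"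
      using RC1_universal by blast
  qed
qed

end
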